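(* Let $\rho\in(0,1)$, $\phi_1,\phi_2>0$, and assume that $\operatorname{prox}_{G/(\rho\phi_2)}$ is a bijection of $\mathbb{R}^{p\times p}$ onto itself and that $\Omega^*\ne\emptyset$. Let $\omega^*\in\Omega^*$. Then there is a Lebesgue-null set $\Omega_0\subset(\mathbb{R}^{p\times p})^3$ such that for every $\omega_k=(X^{(k)},Y^{(k)},V^{(k)})\notin\Omega^*\cup\Omega_0$ there exist $w_1,w_2\in\mathbb{R}^{p\times p}$ with positive entries and $\alpha,\beta,\gamma\in\mathbb{R}^{p\times p}$ such that \[ \|\widehat{\omega}_{k+1}-\omega^*\|_F<\|\widetilde{\omega}_{k+1}-\omega^*\|_F, \] where $\widetilde{\omega}_{k+1}$ is the LADMM step from $\omega_k$ and $\widehat{\omega}_{k+1}$ is the re-parameterized step from $\omega_k$ with parameters $(w_1,w_2,\alpha,\beta,\gamma)$.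
   Context: $F,G:\mathbb{R}^{p\times p}\to\mathbb{R}\cup\{+\infty\}$ are proper, closed, convex. A KKT point of $\min F(X)+G(Y)$ s.t. $X=Y$ is $(X^*,Y^*,V^* )$ with $X^*=Y^*$, $-V^*\in\partial F(X^* )$, $V^*\in\partial G(Y^* )$; $\Omega^*$ is the KKT set. $\operatorname{prox}_{u\varphi}(V):=\arg\min_U\{\varphi(U)+\tfrac{1}{2u}\|U-V\|_F^2\}$. $\circ$ is the Hadamard product. For a weight matrix $w$ with positive entries, the weighted proximal map is $\operatorname{prox}_{w,F}(M):=\arg\min_X\{F(X)+\tfrac12\|\tfrac{1}{\sqrt{w}}\circ(X-M)\|_F^2\}$ (entrywise reciprocal/square root), similarly for $G$. LADMM step: $\widetilde\omega_{k+1}=(\widetilde X,\widetilde Y,\widetilde V)$ with $\widetilde X=\operatorname{prox}_{F/(\rho\phi_1)}\big(X^{(k)}-\tfrac{1}{\phi_1}(X^{(k)}-Y^{(k)}+V^{(k)}/\rho)\big)$, $\widetilde Y=\operatorname{prox}_{G/(\rho\phi_2)}\big(Y^{(k)}-\tfrac{1}{\phi_2}(Y^{(k)}-\widetilde X-V^{(k)}/\rho)\big)$, $\widetilde V=V^{(k)}+\rho(\widetilde X-\widetilde Y)$. Re-parameterized step: $\widehat\omega_{k+1}=(\widehat X,\widehat Y,\widehat V)$ with $\widehat X=\operatorname{prox}_{w_1,F}\big(X^{(k)}-\alpha\circ(V^{(k)}+\gamma\circ(X^{(k)}-Y^{(k)}))\big)$, $\widehat Y=\operatorname{prox}_{w_2,G}\big(Y^{(k)}+\beta\circ(V^{(k)}+\gamma\circ(\widehat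 X-Y^{(k)}))\big)$, $\widehat V=V^{(k)}+\gamma\circ(\widehat X-\widehat Y)$. For triples, $\|\omega\|_F^2=\|X\|_F^2+\|Y\|_F^2+\|V\|_F^2$. *)

theory Defs
  imports "HOL-Analysis.Analysis" "HOL-Library.Extended_Real"
begin

text \<open>p x p real matrices; the HOL-Analysis norm on real^'p^'p is the Frobenius norm,
  inner is the Frobenius inner product, and on triples (nested pairs) the norm is
  sqrt(|X|^2+|Y|^2+|V|^2).\<close>
type_synonym 'p mat = "real^'p^'p"

definition epigraph_e :: "('a \<Rightarrow> ereal) \<Rightarrow> ('a \<times> real) set" where
  "epigraph_e f = {(x, r). f x \<le> ereal r}"

definition proper_fn :: "('a \<Rightarrow> ereal) \<Rightarrow> bool" where
  "proper_fn f \<longleftrightarrow> (\<forall>x. f x \<noteq> -\<infinity>) \<and> (\<exists>x. f x < \<infinity>)"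

definition closed_fn :: "('a::topological_space \<Rightarrow> ereal) \<Rightarrow> bool" where
  "closed_fn f \<longleftrightarrow> closed (epigraph_e f)"

definition convex_fn :: "('a::real_vector \<Rightarrow> ereal) \<Rightarrow> bool" where
  "convex_fn f \<longleftrightarrow> convex (epigraph_e f)"

definition subdiff :: "('a::real_inner \<Rightarrow> ereal) \<Rightarrow> 'a \<Rightarrow> 'a set" where
  "subdiff f x = {v. f x < \<infinity> \<and> (\<forall>y. f x + ereal (inner v (y - x)) \<le> f y)}"

definition KKT_set :: "('p::finite mat \<Rightarrow> ereal) \<Rightarrow> ('p mat \<Rightarrow> ereal) \<Rightarrow> ('p mat \<times> 'p mat \<times> 'p mat) set" where
  "KKT_set F G = {(X, Y, V). X = Y \<and> - V \<in> subdiff F X \<and> V \<in> subdiff G Y}"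

text \<open>Unique minimiser (argmin), as the paper's prox notation presupposes.\<close>
definition argmin_e :: "('a \<Rightarrow> ereal) \<Rightarrow> 'a" where
  "argmin_e h = (THE u. \<forall>v. h u \<le> h v)"

definition prox :: "real \<Rightarrow> ('p::finite mat \<Rightarrow> ereal) \<Rightarrow> 'p mat \<Rightarrow> 'p mat" where
  "prox u \<phi> V = argmin_e (\<lambda>U. \<phi> U + ereal (1 / (2 * u) * (norm (U - V))\<^sup>2))"

definition hadamard :: "'p::finite mat \<Rightarrow> 'p mat \<Rightarrow> 'p mat" (infixl "\<circ>\<^sub>H" 70) where
  "A \<circ>\<^sub>H B = (\<chi> i j. A $ i $ j * B $ i $ j)"

definition wprox :: "'p::finite mat \<Rightarrow> ('p mat \<Rightarrow> ereal) \<Rightarrow> 'p mat \<Rightarrow> 'p mat" where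
  "wprox w \<phi> M = argmin_e (\<lambda>X. \<phi> X +
      ereal (1 / 2 * (norm ((\<chi> i j. 1 / sqrt (w $ i $ j)) \<circ>\<^sub>H (X - M)))\<^sup>2))"

definition ladmm_step :: "('p::finite mat \<Rightarrow> ereal) \<Rightarrow> ('p mat \<Rightarrow> ereal) \<Rightarrow> real \<Rightarrow> real \<Rightarrow> real
    \<Rightarrow> 'p mat \<times> 'p mat \<times> 'p mat \<Rightarrow> 'p mat \<times> 'p mat \<times> 'p mat" where
  "ladmm_step F G \<rho> \<phi>1 \<phi>2 \<omega> = (case \<omega> of (X, Y, V) \<Rightarrow>
     let Xt = prox (1 / (\<rho> * \<phi>1)) F (X - (1 / \<phi>1) *\<^sub>R (X - Y + (1 / \<rho>) *\<^sub>R V));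
         Yt = prox (1 / (\<rho> * \<phi>2)) G (Y - (1 / \<phi>2) *\<^sub>R (Y - Xt - (1 / \<rho>) *\<^sub>R V));
         Vt = V + \<rho> *\<^sub>R (Xt - Yt)
     in (Xt, Yt, Vt))"

definition reparam_step :: "('p::finite mat \<Rightarrow> ereal) \<Rightarrow> ('p mat \<Rightarrow> ereal) \<Rightarrow> 'p mat \<Rightarrow> 'p mat
    \<Rightarrow> 'p mat \<Rightarrow> 'p mat \<Rightarrow> 'p mat
    \<Rightarrow> 'p mat \<times> 'p mat \<times> 'p mat \<Rightarrow> 'p mat \<times> 'p mat \<times> 'p mat" where
  "reparam_step F G w1 w2 \<alpha> \<beta> \<gamma> \<omega> = (case \<omega> of (X, Y, V) \<Rightarrow>
     let Xh = wprox w1 F (X - \<alpha> \<circ>\<^sub>H (V + \<gamma> \<circ>\<^sub>H (X - Y)));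
         Yh = wprox w2 G (Y + \<beta> \<circ>\<^sub>H (V + \<gamma> \<circ>\<^sub>H (Xh - Y)));
         Vh = V + \<gamma> \<circ>\<^sub>H (Xh - Yh)
     in (Xh, Yh, Vh))"

end

theory Submission
  imports Defs
begin

lemma argmin_e_strict:
  assumes "\<And>v. v \<noteq> u \<Longrightarrow> h u < h v"
  shows "argmin_e h = u"
  unfolding argmin_e_def
proof (rule the_equality)
  show "\<forall>v. h u \<le> h v" using assms by (metis order.order_iff_strict order_refl)
next
  fix u' assume "\<forall>v. h u' \<le> h v"
  then show "u' = u" using assms by (metis leD)
qed

lemma prox_subgrad:
  fixes F :: "'a::real_inner \<Rightarrow> ereal"
  assumes nm: "\<And>x. F x \<noteq> -\<infinity>" and sg: "- V \<in> subdiff F X0"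
  shows "argmin_e (\<lambda>U. F U + ereal (1/2 * (norm (U - (X0 - V)))\<^sup>2)) = X0"
proof (rule argmin_e_strict)
  fix U assume ne: "U \<noteq> X0"
  from sg have fin: "F X0 < \<infinity>" and ineq: "F X0 + ereal (inner (-V) (U - X0)) \<le> F U"
    unfolding subdiff_def by auto
  obtain f where f: "F X0 = ereal f" using fin nm[of X0] by (cases "F X0") auto
  have sq: "(norm (U - (X0 - V)))\<^sup>2 = (norm (U - X0))\<^sup>2 + 2 * inner (U - X0) V + (norm V)\<^sup>2"
  proof -
    have "U - (X0 - V) = (U - X0) + V" by simp
    then show ?thesis by (simp only: power2_norm_eq_inner inner_add_left inner_add_right inner_commute[of V "U - X0"])
  qed
  have pos: "(norm (U - X0))\<^sup>2 > 0" using ne by simp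
  show "F X0 + ereal (1/2 * (norm (X0 - (X0 - V)))\<^sup>2) < F U + ereal (1/2 * (norm (U - (X0 - V)))\<^sup>2)"
  proof (cases "F U")
    case (real g)
    with ineq f have "f - inner V (U - X0) \<le> g" by simp
    then have "f + 1/2 * (norm V)\<^sup>2 < g + 1/2 * (norm (U - (X0 - V)))\<^sup>2"
      using sq pos by (simp only: inner_commute[of "U - X0" V] ring_distribs)
    then show ?thesis using f real by simp
  next
    case PInf then show ?thesis using f by simp
  next
    case MInf then show ?thesis using nm[of U] by simp
  qed
qed

lemma hadamard_const: "(\<chi> i j. c) \<circ>\<^sub>H A = c *\<^sub>R A"
  by (simp add: hadamard_def vec_eq_iff)

lemma wprox_one: "wprox (\<chi> i j. 1) F M = argmin_e (\<lambda>X. F X + ereal (1/2 * (norm (X - M))\<^sup>2))"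
  unfolding wprox_def by (simp add: hadamard_const)

lemma wprox_const:
  assumes "0 < u"
  shows "wprox (\<chi> i j. u) G M = prox u G M"
proof -
  have "\<And>X. 1/2 * (norm ((\<chi> i j. 1 / sqrt u) \<circ>\<^sub>H (X - M)))\<^sup>2 = 1 / (2 * u) * (norm (X - M))\<^sup>2"
    using assms by (simp add: hadamard_const power_divide)
  then show ?thesis unfolding wprox_def prox_def by simp
qed

lemma inner_sel: "inner ((0::'p::finite mat), (0::'p mat), axis i (axis j (1::real)) :: 'p mat) (\<omega> :: 'p mat \<times> 'p mat \<times> 'p mat)
   = snd (snd \<omega>) $ i $ j"
  by (cases \<omega>) (simp add: inner_axis')

lemma null_sel: "{\<omega> :: 'p::finite mat \<times> 'p mat \<times> 'p mat. snd (snd \<omega>) $ i $ j = c} \<in> null_sets lebesgue"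
proof -
  have "negligible {x :: 'p mat \<times> 'p mat \<times> 'p mat. inner ((0::'p mat), (0::'p mat), axis i (axis j (1::real)) :: 'p mat) x = c}"
    by (rule negligible_hyperplane) (simp add: zero_prod_def axis_eq_0_iff)
  then show ?thesis by (simp add: inner_sel negligible_iff_null_sets)
qed

theorem theorem5:
  fixes F G :: "'p::finite mat \<Rightarrow> ereal"
    and \<rho> \<phi>1 \<phi>2 :: real
    and \<omega>s :: "'p mat \<times> 'p mat \<times> 'p mat"
  assumes "proper_fn F" "closed_fn F" "convex_fn F"
    and "proper_fn G" "closed_fn G" "convex_fn G"
    and "0 < \<rho>" "\<rho> < 1" "0 < \<phi>1" "0 < \<phi>2"
    and "bij (prox (1 / (\<rho> * \<phi>2)) G)"
    and "KKT_set F G \<noteq> {}"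
    and "\<omega>s \<in> KKT_set F G"
  shows "\<exists>\<Omega>0 :: ('p mat \<times> 'p mat \<times> 'p mat) set. \<Omega>0 \<in> null_sets lebesgue \<and>
           (\<forall>\<omega>. \<omega> \<notin> KKT_set F G \<union> \<Omega>0 \<longrightarrow>
              (\<exists>w1 w2 \<alpha> \<beta> \<gamma>. (\<forall>i j. 0 < w1 $ i $ j) \<and> (\<forall>i j. 0 < w2 $ i $ j) \<and>
                 norm (reparam_step F G w1 w2 \<alpha> \<beta> \<gamma> \<omega> - \<omega>s)
                   < norm (ladmm_step F G \<rho> \<phi>1 \<phi>2 \<omega> - \<omega>s)))"
proof -
  obtain Xs Ys Vs where ws: "\<omega>s = (Xs, Ys, Vs)" by (cases \<omega>s) auto
  with assms(13) have XY: "Xs = Ys" and sg: "- Vs \<in> subdiff F Xs"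
    unfolding KKT_set_def by auto
  have nmF: "\<And>x. F x \<noteq> -\<infinity>" using assms(1) unfolding proper_fn_def by auto
  define H where "H = (\<lambda>(i::'p) (j::'p) (c::real). {\<omega> :: 'p mat \<times> 'p mat \<times> 'p mat. snd (snd \<omega>) $ i $ j = c})"
  define \<Omega>0 where "\<Omega>0 = \<Union> ((\<lambda>(i, j). H i j 0 \<union> H i j (Vs $ i $ j)) ` UNIV)"
  have N: "\<Omega>0 \<in> null_sets lebesgue"
  proof -
    have "negligible \<Omega>0" unfolding \<Omega>0_def
      by (rule negligible_Union) (auto simp: H_def negligible_iff_null_sets null_sel)
    then show ?thesis by (simp add: negligible_iff_null_sets)
  qed
  have E: "\<exists>w1 w2 \<alpha> \<beta> \<gamma>. (\<forall>i j. 0 < w1 $ i $ j) \<and> (\<forall>i j. 0 < w2 $ i $ j) \<and>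
                 norm (reparam_step F G w1 w2 \<alpha> \<beta> \<gamma> \<omega> - \<omega>s)
                   < norm (ladmm_step F G \<rho> \<phi>1 \<phi>2 \<omega> - \<omega>s)" if "\<omega> \<notin> \<Omega>0" for \<omega>
  proof -
    obtain X Y V where w: "\<omega> = (X, Y, V)" by (cases \<omega>) auto
    have Vne: "V $ i $ j \<noteq> 0" "V $ i $ j \<noteq> Vs $ i $ j" for i j
      using that unfolding \<Omega>0_def H_def w by auto
    define d where "d = norm (ladmm_step F G \<rho> \<phi>1 \<phi>2 \<omega> - \<omega>s)"
    have dpos: "0 < d"
    proof (rule ccontr)
      assume "\<not> 0 < d"
      then have "ladmm_step F G \<rho> \<phi>1 \<phi>2 \<omega> = \<omega>s" unfolding d_def by simp
      then have "V = Vs" using XY unfolding w ws ladmm_step_def Let_def by auto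
      then show False using Vne(2)[of undefined undefined] by simp
    qed
    define u where "u = 1 / (\<rho> * \<phi>2)"
    have upos: "0 < u" using assms(7,10) unfolding u_def by simp
    define one :: "'p mat" where "one = (\<chi> i j. 1)"
    have onepos: "0 < norm one"
    proof -
      have "one $ undefined $ undefined \<noteq> 0" unfolding one_def by simp
      then have "one \<noteq> 0" by auto
      then show ?thesis by simp
    qed
    define B where "B = ((\<lambda>(i, j). - ((V - Vs) $ i $ j * (X - Y) $ i $ j) / V $ i $ j) ` UNIV)
      \<union> ((\<lambda>(i, j). - ((V - Vs) $ i $ j * (Xs - Y) $ i $ j) / V $ i $ j) ` UNIV)"
    have "finite B" unfolding B_def by simp
    moreover have "infinite {0<..<d / norm one}" using dpos onepos by simp
    ultimately have "infinite ({0<..<d / norm one} - B)" by (simp add: Diff_infinite_finite)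
    then obtain t where t: "t \<in> {0<..<d / norm one}" "t \<notin> B"
      by (metis Diff_iff finite.emptyI ex_in_conv)
    have tpos: "0 < t" using t by simp
    define D where "D = t *\<^sub>R one"
    define \<gamma> :: "'p mat" where "\<gamma> = (\<chi> i j. (V - Vs) $ i $ j / t)"
    define S where "S = V + \<gamma> \<circ>\<^sub>H (X - Y)"
    define T where "T = V + \<gamma> \<circ>\<^sub>H (Xs - Y)"
    have Sne: "S $ i $ j \<noteq> 0" for i j
    proof
      assume "S $ i $ j = 0"
      then have "V $ i $ j + (V - Vs) $ i $ j / t * (X - Y) $ i $ j = 0"
        unfolding S_def \<gamma>_def hadamard_def by simp
      then have "t * V $ i $ j + (V - Vs) $ i $ j * (X - Y) $ i $ j = 0"
        using tpos by (simp add: field_simps)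
      then have "t = - ((V - Vs) $ i $ j * (X - Y) $ i $ j) / V $ i $ j"
        using Vne(1)[of i j] by (simp add: field_simps)
      then show False using t(2) unfolding B_def by auto
    qed
    have Tne: "T $ i $ j \<noteq> 0" for i j
    proof
      assume "T $ i $ j = 0"
      then have "V $ i $ j + (V - Vs) $ i $ j / t * (Xs - Y) $ i $ j = 0"
        unfolding T_def \<gamma>_def hadamard_def by simp
      then have "t * V $ i $ j + (V - Vs) $ i $ j * (Xs - Y) $ i $ j = 0"
        using tpos by (simp add: field_simps)
      then have "t = - ((V - Vs) $ i $ j * (Xs - Y) $ i $ j) / V $ i $ j"
        using Vne(1)[of i j] by (simp add: field_simps)
      then show False using t(2) unfolding B_def by auto
    qed
    define \<alpha> :: "'p mat" where "\<alpha> = (\<chi> i j. (X - Xs + Vs) $ i $ j / S $ i $ j)"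
    define w1 :: "'p mat" where "w1 = (\<chi> i j. 1)"
    have M1: "X - \<alpha> \<circ>\<^sub>H (V + \<gamma> \<circ>\<^sub>H (X - Y)) = Xs - Vs"
    proof -
      have "V + \<gamma> \<circ>\<^sub>H (X - Y) = S" by (simp add: S_def)
      then show ?thesis using Sne unfolding \<alpha>_def hadamard_def by (simp add: vec_eq_iff)
    qed
    have Xh: "wprox w1 F (X - \<alpha> \<circ>\<^sub>H (V + \<gamma> \<circ>\<^sub>H (X - Y))) = Xs"
      unfolding M1 w1_def wprox_one using prox_subgrad[OF nmF sg] by simp
    have "surj (prox u G)" using assms(11) unfolding u_def by (simp add: bij_is_surj)
    then obtain N2 where N2: "prox u G N2 = Xs + D" by (metis surjD)
    define \<beta> :: "'p mat" where "\<beta> = (\<chi> i j. (N2 - Y) $ i $ j / T $ i $ j)"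
    define w2 :: "'p mat" where "w2 = (\<chi> i j. u)"
    have M2: "Y + \<beta> \<circ>\<^sub>H (V + \<gamma> \<circ>\<^sub>H (Xs - Y)) = N2"
    proof -
      have "V + \<gamma> \<circ>\<^sub>H (Xs - Y) = T" by (simp add: T_def)
      then show ?thesis using Tne unfolding \<beta>_def hadamard_def by (simp add: vec_eq_iff)
    qed
    have Yh: "wprox w2 G (Y + \<beta> \<circ>\<^sub>H (V + \<gamma> \<circ>\<^sub>H (Xs - Y))) = Xs + D"
      unfolding M2 w2_def wprox_const[OF upos] N2 ..
    have Vh: "V + \<gamma> \<circ>\<^sub>H (Xs - (Xs + D)) = Vs"
      using tpos unfolding \<gamma>_def D_def one_def hadamard_def by (simp add: vec_eq_iff)
    have R: "reparam_step F G w1 w2 \<alpha> \<beta> \<gamma> \<omega> = (Xs, Xs + D, Vs)"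
      unfolding w reparam_step_def Let_def using Xh Yh Vh by simp
    have "norm (reparam_step F G w1 w2 \<alpha> \<beta> \<gamma> \<omega> - \<omega>s) = norm D"
    proof -
      have "reparam_step F G w1 w2 \<alpha> \<beta> \<gamma> \<omega> - \<omega>s = (0, D, 0)"
        unfolding R ws XY by simp
      then show ?thesis by (simp add: norm_Pair)
    qed
    also have "\<dots> = t * norm one" unfolding D_def using tpos by simp
    also have "\<dots> < d"
    proof -
      have "t < d / norm one" using t(1) by simp
      then show ?thesis using onepos by (simp add: pos_less_divide_eq)
    qed
    finally have lt: "norm (reparam_step F G w1 w2 \<alpha> \<beta> \<gamma> \<omega> - \<omega>s) < norm (ladmm_step F G \<rho> \<phi>1 \<phi>2 \<omega> - \<omega>s)"
      unfolding d_def .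
    have "\<forall>i j. 0 < w1 $ i $ j" "\<forall>i j. 0 < w2 $ i $ j" unfolding w1_def w2_def using upos by auto
    then show ?thesis using lt
      by (intro exI[of _ w1] exI[of _ w2] exI[of _ \<alpha>] exI[of _ \<beta>] exI[of _ \<gamma>]) simp
  qed
  show ?thesis
  proof (intro exI[of _ \<Omega>0] conjI allI impI)
    show "\<Omega>0 \<in> null_sets lebesgue" by (rule N)
  next
    fix \<omega> assume "\<omega> \<notin> KKT_set F G \<union> \<Omega>0"
    then have "\<omega> \<notin> \<Omega>0" by simp
    then show "\<exists>w1 w2 \<alpha> \<beta> \<gamma>. (\<forall>i j. 0 < w1 $ i $ j) \<and> (\<forall>i j. 0 < w2 $ i $ j) \<and>
                 norm (reparam_step F G w1 w2 \<alpha> \<beta> \<gamma> \<omega> - \<omega>s)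
                   < norm (ladmm_step F G \<rho> \<phi>1 \<phi>2 \<omega> - \<omega>s)" by (rule E)
  qed
qed

end
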